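(* Let $k\ge3$ and $m\ge1$ be integers and consider any realization of the random $k$-Apollonian network $A(m)$. For an edge $e$ of $A(m)$ let $N^{\ast}(e)$ be the number of active $k$-cliques of $A(m)$ containing $e$. Let $F$ be the spanning forest of $A(m)$ defined as follows: for each $1\le t\le m$, if the vertex $x$ born in round $t$ was joined to the $k$-clique $C$, then in $F$ the vertex $x$ is joined to a vertex $u\in V(C)$ with $N^{\ast}(xu)=\max_{v\in V(C)}N^{\ast}(xv)$ (ties broken arbitrarily). If $xy\in E(F)$, $x$ is born later than $y$, and the degree of $x$ in $A(m)$ is at least $2k-1$, then $N^{\ast}(xy)\ge (k-1)^2/2$.
   Context: Random $k$-Apollonian process: $A(0)$ is a clique on $k$ vertices (born in round $0$), marked active. For $t\ge1$, $A(t)$ is obtained from $A(t-1)$ by choosing an active $k$-clique of $A(t-1)$ uniformly at random and creating a new vertex (born in round $t$) joined to all its vertices; the chosen clique becomes non-active and the $k$ new $k$-cliques containing the new vertex are marked active. *)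

theory Defs
  imports Complex_Main
begin

(* A realization of the random k-Apollonian process up to round m is encoded by
   the sequence C of chosen cliques: C t (t >= 1) is the active k-clique chosen in round t.
   Vertices are natural numbers: 0..k-1 are born in round 0, vertex k+t-1 is born in round t. *)

fun ap_active :: "nat \<Rightarrow> (nat \<Rightarrow> nat set) \<Rightarrow> nat \<Rightarrow> nat set set" where
  "ap_active k C 0 = {{0..<k}}"
| "ap_active k C (Suc t) =
     (ap_active k C t - {C (Suc t)}) \<union> (\<lambda>v. insert (k + t) (C (Suc t) - {v})) ` C (Suc t)"

fun ap_edges :: "nat \<Rightarrow> (nat \<Rightarrow> nat set) \<Rightarrow> nat \<Rightarrow> nat set set" where
  "ap_edges k C 0 = {{a, b} | a b. a < k \<and> b < k \<and> a \<noteq> b}"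
| "ap_edges k C (Suc t) = ap_edges k C t \<union> {{k + t, v} | v. v \<in> C (Suc t)}"

definition ap_valid :: "nat \<Rightarrow> (nat \<Rightarrow> nat set) \<Rightarrow> nat \<Rightarrow> bool" where
  "ap_valid k C m \<longleftrightarrow> (\<forall>t\<in>{1..m}. C t \<in> ap_active k C (t - 1))"

definition born :: "nat \<Rightarrow> nat \<Rightarrow> nat" where
  "born k v = (if v < k then 0 else v + 1 - k)"

definition Nstar :: "nat \<Rightarrow> (nat \<Rightarrow> nat set) \<Rightarrow> nat \<Rightarrow> nat \<Rightarrow> nat \<Rightarrow> nat" where
  "Nstar k C m a b = card {Q \<in> ap_active k C m. a \<in> Q \<and> b \<in> Q}"

definition ap_degree :: "nat \<Rightarrow> (nat \<Rightarrow> nat set) \<Rightarrow> nat \<Rightarrow> nat \<Rightarrow> nat" where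
  "ap_degree k C m x = card {y. {x, y} \<in> ap_edges k C m}"

definition forest_edges :: "nat \<Rightarrow> nat \<Rightarrow> (nat \<Rightarrow> nat) \<Rightarrow> nat set set" where
  "forest_edges k m p = {{k + t - 1, p t} | t. t \<in> {1..m}}"

end

theory Submission
  imports Defs
begin

lemma valid_C: "ap_valid k C m \<Longrightarrow> Suc s \<le> m \<Longrightarrow> C (Suc s) \<in> ap_active k C s"
  unfolding ap_valid_def by (metis One_nat_def Suc_le_mono atLeastAtMost_iff diff_Suc_1 le0 le_SucE)

lemma active_props:
  assumes "ap_valid k C m" "s \<le> m"
  shows "finite (ap_active k C s) \<and> (\<forall>Q\<in>ap_active k C s. card Q = k \<and> Q \<subseteq> {..<k+s})"
  using assms(2)
proof (induction s)
  case 0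
  then show ?case by auto
next
  case (Suc s)
  hence IH: "finite (ap_active k C s)" "\<And>Q. Q\<in>ap_active k C s \<Longrightarrow> card Q = k \<and> Q \<subseteq> {..<k+s}"
    by auto
  have S: "C (Suc s) \<in> ap_active k C s" using valid_C[OF assms(1) Suc.prems] .
  have cS: "card (C (Suc s)) = k" and sS: "C (Suc s) \<subseteq> {..<k+s}" using IH(2)[OF S] by auto
  have fS: "finite (C (Suc s))" using sS finite_subset by blast
  have new: "card (insert (k+s) (C (Suc s) - {v})) = k \<and> insert (k+s) (C (Suc s) - {v}) \<subseteq> {..<k+Suc s}"
    if "v \<in> C (Suc s)" for v
  proof -
    have "k + s \<notin> C (Suc s) - {v}" using sS by auto
    hence "card (insert (k+s) (C (Suc s) - {v})) = card (C (Suc s) - {v}) + 1"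
      using fS by simp
    also have "\<dots> = k"
    proof -
      have "card (C (Suc s) - {v}) = k - 1" using cS that fS by (simp add: card_Diff_singleton)
      moreover have "k > 0" using cS that fS card_gt_0_iff by blast
      ultimately show ?thesis by simp
    qed
    finally show ?thesis using sS by auto
  qed
  show ?case using IH(1) IH(2) new fS by (auto simp del: ap_active.simps simp: ap_active.simps(2) intro: less_SucI)
qed

lemma count_if: "finite A \<Longrightarrow> (\<Sum>v\<in>A. (if P v then 1 else 0::nat)) = card {v\<in>A. P v}"
  by (simp add: sum.inter_filter[symmetric])

lemma nbr:
  assumes "ap_valid k C m" "s \<le> m" "{k+t0, y} \<in> ap_edges k C s"
  shows "y \<in> C (Suc t0) \<or> y \<in> (\<lambda>s'. k+s'-1) ` {s'\<in>{Suc t0+1..s}. k+t0 \<in> C s'}"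
  using assms(2,3)
proof (induction s arbitrary: y)
  case 0
  then show ?case by (auto simp: doubleton_eq_iff)
next
  case (Suc s)
  show ?case
  proof (cases "{k+t0, y} \<in> ap_edges k C s")
    case True
    from Suc.IH[OF _ True] Suc.prems(1) show ?thesis by auto
  next
    case False
    then obtain v where v: "v \<in> C (Suc s)" "{k+t0, y} = {k+s, v}" using Suc.prems(2) by auto
    have "C (Suc s) \<in> ap_active k C s" using valid_C[OF assms(1) Suc.prems(1)] .
    hence "C (Suc s) \<subseteq> {..<k+s}" using active_props[OF assms(1), of s] Suc.prems(1) by auto
    hence vl: "v < k + s" using v by auto
    show ?thesis
    proof (cases "t0 = s")
      case True
      then show ?thesis using v vl by (auto simp: doubleton_eq_iff)
    next
      case False
      hence "v = k + t0" "y = k + s" using v vl by (auto simp: doubleton_eq_iff)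
      moreover have "t0 < s" using vl \<open>v = k+t0\<close> by simp
      ultimately have "Suc s \<in> {s'\<in>{Suc t0+1..Suc s}. k+t0 \<in> C s'}" "y = k + Suc s - 1"
        using v by auto
      then show ?thesis by blast
    qed
  qed
qed

definition GG :: "nat \<Rightarrow> nat \<Rightarrow> nat" where
  "GG k c = (\<Sum>j\<in>{1..c}. k - j)"

lemma GG_Suc: "GG k (Suc c) = GG k c + (k - Suc c)"
  unfolding GG_def by simp

lemma GG_mono: "a \<le> b \<Longrightarrow> GG k a \<le> GG k b"
  unfolding GG_def by (rule sum_mono2) auto

lemma GG_closed: "n \<le> k \<Longrightarrow> 2 * int (GG k n) = int n * (2 * int k - int n - 1)"
proof (induction n)
  case 0
  then show ?case by (simp add: GG_def)
next
  case (Suc n)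
  then show ?case by (simp add: GG_Suc of_nat_diff algebra_simps)
qed

definition XX :: "nat \<Rightarrow> (nat \<Rightarrow> nat set) \<Rightarrow> nat \<Rightarrow> nat \<Rightarrow> nat set set" where
  "XX k C t0 s = {Q\<in>ap_active k C s. k+t0 \<in> Q}"

definition cc :: "nat \<Rightarrow> (nat \<Rightarrow> nat set) \<Rightarrow> nat \<Rightarrow> nat \<Rightarrow> nat" where
  "cc k C t0 s = card {s'\<in>{Suc t0+1..s}. k+t0 \<in> C s'}"

definition Pinv :: "nat \<Rightarrow> (nat \<Rightarrow> nat set) \<Rightarrow> nat \<Rightarrow> nat \<Rightarrow> bool" where
  "Pinv k C t0 s \<longleftrightarrow> finite (XX k C t0 s) \<and>
     (\<forall>Q\<in>XX k C t0 s. k - 1 - cc k C t0 s \<le> card (Q \<inter> C (Suc t0))) \<and>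
     k*(k-1) + (k-3) * GG k (cc k C t0 s) \<le> (\<Sum>Q\<in>XX k C t0 s. card (Q \<inter> C (Suc t0)))"

lemma Pinv_base:
  assumes "ap_valid k C m" "Suc t0 \<le> m"
  shows "Pinv k C t0 (Suc t0)"
proof -
  define D where "D = C (Suc t0)"
  define x where "x = k + t0"
  define f where "f = (\<lambda>v. insert x (D - {v}))"
  have DA: "D \<in> ap_active k C t0" unfolding D_def using valid_C[OF assms] .
  have Aprops: "\<And>Q. Q \<in> ap_active k C t0 \<Longrightarrow> card Q = k \<and> Q \<subseteq> {..<k+t0}"
    "finite (ap_active k C t0)"
    using active_props[OF assms(1), of t0] assms(2) by auto
  have cD: "card D = k" and sD: "D \<subseteq> {..<x}" using Aprops(1)[OF DA] x_def by auto
  have fD: "finite D" using sD finite_subset by blast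
  have xD: "x \<notin> D" using sD by auto
  have X: "XX k C t0 (Suc t0) = f ` D"
  proof
    show "XX k C t0 (Suc t0) \<subseteq> f ` D"
    proof
      fix Q assume "Q \<in> XX k C t0 (Suc t0)"
      hence Q: "Q \<in> ap_active k C (Suc t0)" "x \<in> Q" unfolding XX_def x_def by auto
      show "Q \<in> f ` D"
      proof (cases "Q \<in> ap_active k C t0")
        case True
        then show ?thesis using Aprops(1)[OF True] Q(2) x_def by auto
      next
        case False
        then show ?thesis using Q(1) unfolding f_def D_def x_def by auto
      qed
    qed
  next
    show "f ` D \<subseteq> XX k C t0 (Suc t0)"
      unfolding XX_def f_def D_def x_def by auto
  qed
  have inj: "inj_on f D"
  proof (rule inj_onI)
    fix v w assume vw: "v \<in> D" "w \<in> D" "f v = f w"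
    show "v = w"
    proof (rule ccontr)
      assume "v \<noteq> w"
      hence "v \<in> f w" using vw unfolding f_def by auto
      moreover have "v \<notin> f v" using vw xD unfolding f_def by auto
      ultimately show False using vw by simp
    qed
  qed
  have fv: "f v \<inter> D = D - {v}" if "v \<in> D" for v unfolding f_def using xD by auto
  have "(\<Sum>Q\<in>XX k C t0 (Suc t0). card (Q \<inter> D)) = (\<Sum>v\<in>D. card (f v \<inter> D))"
    unfolding X using sum.reindex[OF inj] by simp
  also have "\<dots> = (\<Sum>v\<in>D. k - 1)"
    using fv cD fD by (intro sum.cong) (auto simp: card_Diff_singleton)
  finally have sm: "(\<Sum>Q\<in>XX k C t0 (Suc t0). card (Q \<inter> D)) = k * (k - 1)" using cD by simp
  have c0: "cc k C t0 (Suc t0) = 0" unfolding cc_def by simp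
  have "\<forall>Q\<in>XX k C t0 (Suc t0). k - 1 - 0 \<le> card (Q \<inter> D)"
    unfolding X using fv cD fD by (auto simp: card_Diff_singleton)
  then show ?thesis unfolding Pinv_def c0 using sm fD X D_def by (simp add: GG_def)
qed

lemma Pinv_step:
  assumes "ap_valid k C m" "Suc t0 \<le> s" "Suc s \<le> m" "k \<ge> 3" "Pinv k C t0 s"
  shows "Pinv k C t0 (Suc s)"
proof -
  define D where "D = C (Suc t0)"
  define x where "x = k + t0"
  define S where "S = C (Suc s)"
  define z where "z = k + s"
  define g where "g = (\<lambda>v. insert z (S - {v}))"
  define c where "c = cc k C t0 s"
  have SA: "S \<in> ap_active k C s" unfolding S_def using valid_C[OF assms(1,3)] .
  have Aprops: "\<And>Q. Q \<in> ap_active k C s \<Longrightarrow> card Q = k \<and> Q \<subseteq> {..<k+s}"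
    "finite (ap_active k C s)"
    using active_props[OF assms(1), of s] assms(3) by auto
  have cS: "card S = k" and sS: "S \<subseteq> {..<z}" using Aprops(1)[OF SA] z_def by auto
  have fS: "finite S" using sS finite_subset by blast
  have DA: "D \<in> ap_active k C t0" unfolding D_def using valid_C[OF assms(1)] assms(2,3) by simp
  have "D \<subseteq> {..<k+t0}" using active_props[OF assms(1), of t0] assms(2,3) DA by auto
  hence sD: "D \<subseteq> {..<x}" unfolding x_def .
  have xz: "x < z" unfolding x_def z_def using assms(2) by simp
  have xD: "x \<notin> D" and zD: "z \<notin> D" using sD xz by auto
  have zS: "z \<notin> S" using sS by auto
  have A1: "ap_active k C (Suc s) = (ap_active k C s - {S}) \<union> g ` S"
    unfolding g_def S_def z_def by simp
  have P: "finite (XX k C t0 s)" "\<And>Q. Q\<in>XX k C t0 s \<Longrightarrow> k - 1 - c \<le> card (Q \<inter> D)"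
    "k*(k-1) + (k-3) * GG k c \<le> (\<Sum>Q\<in>XX k C t0 s. card (Q \<inter> D))"
    using assms(5) unfolding Pinv_def c_def D_def by auto
  have ccset: "{s'\<in>{Suc t0+1..Suc s}. k+t0 \<in> C s'} =
     (if x \<in> S then insert (Suc s) {s'\<in>{Suc t0+1..s}. k+t0 \<in> C s'} else {s'\<in>{Suc t0+1..s}. k+t0 \<in> C s'})"
    using assms(2) unfolding x_def S_def by (auto simp: le_Suc_eq)
  show ?thesis
  proof (cases "x \<in> S")
    case False
    have X: "XX k C t0 (Suc s) = XX k C t0 s"
      unfolding XX_def A1 using False xz unfolding g_def x_def by auto
    have "cc k C t0 (Suc s) = c" unfolding cc_def c_def ccset using False by simp
    then show ?thesis using P X unfolding Pinv_def D_def by simp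
  next
    case True
    have cs: "cc k C t0 (Suc s) = Suc c" unfolding cc_def c_def ccset using True by simp
    have SX: "S \<in> XX k C t0 s" unfolding XX_def x_def using SA True x_def by simp
    have X: "XX k C t0 (Suc s) = (XX k C t0 s - {S}) \<union> g ` (S - {x})"
      unfolding XX_def A1 using True xz unfolding g_def x_def by auto
    have disj: "(XX k C t0 s - {S}) \<inter> g ` (S - {x}) = {}"
    proof -
      have "Q \<subseteq> {..<z}" if "Q \<in> XX k C t0 s" for Q using that Aprops(1) unfolding XX_def z_def by auto
      moreover have "z \<in> g v" for v unfolding g_def by simp
      ultimately show ?thesis by blast
    qed
    have inj: "inj_on g S"
    proof (rule inj_onI)
      fix v w assume vw: "v \<in> S" "w \<in> S" "g v = g w"
      show "v = w"
      proof (rule ccontr)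
        assume "v \<noteq> w"
        hence "v \<in> g w" using vw unfolding g_def by auto
        moreover have "v \<notin> g v" using vw zS unfolding g_def by auto
        ultimately show False using vw by simp
      qed
    qed
    hence inj': "inj_on g (S - {x})" by (rule inj_on_subset) auto
    have gv: "g v \<inter> D = (S \<inter> D) - {v}" for v unfolding g_def using zD by auto
    define j where "j = card (S \<inter> D)"
    have fSD: "finite (S \<inter> D)" using fS by simp
    have fX: "finite (XX k C t0 (Suc s))" unfolding X using P(1) fS by simp
    have jb: "k - 1 - c \<le> j" unfolding j_def using P(2)[OF SX] .
    have sum_new: "(\<Sum>Q\<in>g ` (S - {x}). card (Q \<inter> D)) + j = (k - 1) * j"
    proof -
      have "(\<Sum>Q\<in>g ` (S - {x}). card (Q \<inter> D)) = (\<Sum>v\<in>S - {x}. card ((S \<inter> D) - {v}))"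
        using sum.reindex[OF inj', of "\<lambda>Q. card (Q \<inter> D)"] gv by (simp add: comp_def)
      moreover have "j = (\<Sum>v\<in>S - {x}. (if v \<in> D then 1 else 0))"
      proof -
        have "{v\<in>S - {x}. v \<in> D} = S \<inter> D" using xD by auto
        thus ?thesis unfolding j_def using count_if[of "S - {x}" "\<lambda>v. v \<in> D"] fS by simp
      qed
      moreover have "(\<Sum>v\<in>S - {x}. card ((S \<inter> D) - {v})) + (\<Sum>v\<in>S - {x}. (if v \<in> D then 1 else 0))
          = (\<Sum>v\<in>S - {x}. j)"
        unfolding sum.distrib[symmetric]
      proof (rule sum.cong)
        fix v assume "v \<in> S - {x}"
        then show "card (S \<inter> D - {v}) + (if v \<in> D then 1 else 0) = j"
        proof (cases "v \<in> D")
          case True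
          hence "card (S \<inter> D) > 0" using fSD \<open>v \<in> S - {x}\<close> card_gt_0_iff by blast
          then show ?thesis unfolding j_def using fSD True \<open>v \<in> S - {x}\<close> by (simp add: card_Diff_singleton)
        qed (simp add: j_def)
      qed simp
      moreover have "card (S - {x}) = k - 1" using cS True fS by (simp add: card_Diff_singleton)
      ultimately show ?thesis by simp
    qed
    have sumX: "(\<Sum>Q\<in>XX k C t0 s. card (Q \<inter> D)) = j + (\<Sum>Q\<in>XX k C t0 s - {S}. card (Q \<inter> D))"
      unfolding j_def using sum.remove[OF P(1) SX] by simp
    have sumX': "(\<Sum>Q\<in>XX k C t0 (Suc s). card (Q \<inter> D)) =
        (\<Sum>Q\<in>XX k C t0 s - {S}. card (Q \<inter> D)) + (\<Sum>Q\<in>g ` (S - {x}). card (Q \<inter> D))"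
      unfolding X using sum.union_disjoint[OF _ _ disj] P(1) fS by simp
    have eq: "(\<Sum>Q\<in>XX k C t0 (Suc s). card (Q \<inter> D)) = (\<Sum>Q\<in>XX k C t0 s. card (Q \<inter> D)) + (k - 3) * j"
    proof -
      have "k - 1 = 2 + (k - 3)" using assms(4) by simp
      hence "(k - 1) * j = j + j + (k - 3) * j" by (simp add: algebra_simps)
      thus ?thesis using sumX sumX' sum_new by linarith
    qed
    have "(k - 3) * GG k (Suc c) = (k - 3) * GG k c + (k - 3) * (k - Suc c)"
      by (simp add: GG_Suc algebra_simps)
    also have "(k - 3) * (k - Suc c) \<le> (k - 3) * j" using jb by (intro mult_le_mono2) simp
    finally have g3: "k*(k-1) + (k - 3) * GG k (Suc c) \<le> (\<Sum>Q\<in>XX k C t0 (Suc s). card (Q \<inter> D))"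
      using eq P(3) by linarith
    have a3: "\<forall>Q\<in>XX k C t0 (Suc s). k - 1 - Suc c \<le> card (Q \<inter> D)"
    proof
      fix Q assume "Q \<in> XX k C t0 (Suc s)"
      then consider "Q \<in> XX k C t0 s" | v where "v \<in> S - {x}" "Q = g v" unfolding X by auto
      then show "k - 1 - Suc c \<le> card (Q \<inter> D)"
      proof cases
        case 1 then show ?thesis using P(2) by fastforce
      next
        case 2
        have "card (S \<inter> D) \<le> card (S \<inter> D - {v}) + 1"
          using fSD by (simp add: card_Diff_singleton_if; arith)
        then show ?thesis using 2 gv jb unfolding j_def by simp
      qed
    qed
    show ?thesis unfolding Pinv_def cs using fX a3 g3 unfolding D_def by simp
  qed
qed

lemma Pinv_all:
  assumes "ap_valid k C m" "k \<ge> 3" "Suc t0 \<le> s" "s \<le> m"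
  shows "Pinv k C t0 s"
  using assms(3,4)
proof (induction s rule: dec_induct)
  case base
  then show ?case using Pinv_base[OF assms(1)] by simp
next
  case (step n)
  then show ?case using Pinv_step[OF assms(1) step(1) _ assms(2)] by simp
qed

theorem lemma13:
  fixes k m :: nat and C :: "nat \<Rightarrow> nat set" and p :: "nat \<Rightarrow> nat" and x y :: nat
  assumes "k \<ge> 3" and "m \<ge> 1"
    and "ap_valid k C m"
    and "\<forall>t\<in>{1..m}. p t \<in> C t \<and>
           (\<forall>v\<in>C t. Nstar k C m (k + t - 1) v \<le> Nstar k C m (k + t - 1) (p t))"
    and "{x, y} \<in> forest_edges k m p"
    and "born k x > born k y"
    and "ap_degree k C m x \<ge> 2 * k - 1"
  shows "real (Nstar k C m x y) \<ge> (real k - 1)^2 / 2"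
proof -
  obtain t where t: "t \<in> {1..m}" "{x, y} = {k + t - 1, p t}"
    using assms(5) unfolding forest_edges_def by auto
  obtain t0 where t0: "t = Suc t0" using t(1) by (cases t) auto
  define D where "D = C (Suc t0)"
  have tm: "Suc t0 \<le> m" using t t0 by simp
  have DA: "D \<in> ap_active k C t0" unfolding D_def using valid_C[OF assms(3) tm] .
  have Dp: "card D = k \<and> D \<subseteq> {..<k+t0}" using active_props[OF assms(3), of t0] tm DA by auto
  have fD: "finite D" using Dp finite_subset by blast
  have pt: "p t \<in> D" and pmax: "\<And>v. v \<in> D \<Longrightarrow> Nstar k C m (k + t0) v \<le> Nstar k C m (k + t0) (p t)"
  proof -
    have "p t \<in> C t \<and> (\<forall>v\<in>C t. Nstar k C m (k + t - 1) v \<le> Nstar k C m (k + t - 1) (p t))"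
      using assms(4) t(1) by blast
    moreover have "k + t - 1 = k + t0" using t0 by simp
    ultimately show "p t \<in> D" "\<And>v. v \<in> D \<Longrightarrow> Nstar k C m (k + t0) v \<le> Nstar k C m (k + t0) (p t)"
      unfolding D_def t0 by auto
  qed
  have bp: "born k (p t) < t" using pt Dp t0 unfolding born_def by auto
  have bx: "born k (k + t0) = t" unfolding born_def t0 by simp
  have xy: "x = k + t0 \<and> y = p t"
  proof -
    have "x = k + t0 \<or> x = p t" using t(2) t0 by (auto simp: doubleton_eq_iff)
    moreover have "x \<noteq> p t"
    proof
      assume "x = p t"
      hence "y = k + t0" using t(2) t0 by (auto simp: doubleton_eq_iff)
      thus False using assms(6) \<open>x = p t\<close> bp bx by simp
    qed
    ultimately show ?thesis using t(2) t0 by (auto simp: doubleton_eq_iff)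
  qed
  define Ch where "Ch = {s'\<in>{Suc t0+1..m}. k+t0 \<in> C s'}"
  have "{y. {x, y} \<in> ap_edges k C m} \<subseteq> D \<union> (\<lambda>s'. k+s'-1) ` Ch"
    using nbr[OF assms(3) le_refl] xy unfolding D_def Ch_def by blast
  hence "ap_degree k C m x \<le> card (D \<union> (\<lambda>s'. k+s'-1) ` Ch)"
    unfolding ap_degree_def using fD Ch_def by (intro card_mono) auto
  also have "\<dots> \<le> card D + card ((\<lambda>s'. k+s'-1) ` Ch)" by (rule card_Un_le)
  also have "\<dots> \<le> k + card Ch" using Dp card_image_le[of Ch] Ch_def by simp
  finally have "k - 1 \<le> card Ch" using assms(7) by simp
  hence cm: "k - 1 \<le> cc k C t0 m" unfolding cc_def Ch_def .
  have P: "Pinv k C t0 m" using Pinv_all[OF assms(3,1) tm le_refl] .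
  hence fX: "finite (XX k C t0 m)"
    and S1: "k*(k-1) + (k-3) * GG k (cc k C t0 m) \<le> (\<Sum>Q\<in>XX k C t0 m. card (Q \<inter> D))"
    unfolding Pinv_def D_def by auto
  have "GG k (k - 1) \<le> GG k (cc k C t0 m)" using GG_mono[OF cm] .
  hence "(k-3) * GG k (k - 1) \<le> (k-3) * GG k (cc k C t0 m)" by (rule mult_le_mono2)
  hence S2: "k*(k-1) + (k-3) * GG k (k - 1) \<le> (\<Sum>Q\<in>XX k C t0 m. card (Q \<inter> D))"
    using S1 by linarith
  have swap: "(\<Sum>Q\<in>XX k C t0 m. card (Q \<inter> D)) = (\<Sum>v\<in>D. Nstar k C m (k + t0) v)"
  proof -
    have "(\<Sum>v\<in>D. Nstar k C m (k + t0) v) = (\<Sum>v\<in>D. \<Sum>Q\<in>XX k C t0 m. (if v \<in> Q then 1 else 0))"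
    proof (rule sum.cong)
      fix v assume "v \<in> D"
      have "{Q \<in> ap_active k C m. k + t0 \<in> Q \<and> v \<in> Q} = {Q \<in> XX k C t0 m. v \<in> Q}"
        unfolding XX_def by auto
      then show "Nstar k C m (k + t0) v = (\<Sum>Q\<in>XX k C t0 m. (if v \<in> Q then 1 else 0))"
        unfolding Nstar_def using count_if[OF fX, of "\<lambda>Q. v \<in> Q"] by simp
    qed simp
    also have "\<dots> = (\<Sum>Q\<in>XX k C t0 m. \<Sum>v\<in>D. (if v \<in> Q then 1 else 0))" by (rule sum.swap)
    also have "\<dots> = (\<Sum>Q\<in>XX k C t0 m. card (Q \<inter> D))"
    proof (rule sum.cong)
      fix Q assume "Q \<in> XX k C t0 m"
      have "{v\<in>D. v \<in> Q} = Q \<inter> D" by auto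
      then show "(\<Sum>v\<in>D. (if v \<in> Q then 1 else 0)) = card (Q \<inter> D)"
        using count_if[OF fD, of "\<lambda>v. v \<in> Q"] by simp
    qed simp
    finally show ?thesis by simp
  qed
  have "(\<Sum>v\<in>D. Nstar k C m (k + t0) v) \<le> card D * Nstar k C m (k + t0) (p t)"
    using sum_bounded_above[of D "\<lambda>v. Nstar k C m (k + t0) v" "Nstar k C m (k + t0) (p t)"] pmax by simp
  hence S3: "k*(k-1) + (k-3) * GG k (k - 1) \<le> k * Nstar k C m x y"
    using S2 swap Dp xy by simp
  have G: "2 * int (GG k (k - 1)) = int (k - 1) * int k"
    using GG_closed[of "k - 1" k] assms(1) by (simp add: of_nat_diff)
  define N where "N = Nstar k C m x y"
  have "int k * (int k - 1) + (int k - 3) * int (GG k (k - 1)) \<le> int k * int N"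
  proof -
    have "int (k*(k-1) + (k-3) * GG k (k - 1)) \<le> int (k * N)" using S3 unfolding N_def by linarith
    moreover have "int (k*(k-1) + (k-3) * GG k (k - 1)) = int k * (int k - 1) + (int k - 3) * int (GG k (k - 1))"
      using assms(1) by (simp add: of_nat_diff)
    ultimately show ?thesis by simp
  qed
  hence h2: "2 * (int k * (int k - 1)) + (int k - 3) * (2 * int (GG k (k - 1))) \<le> 2 * (int k * int N)"
    by (simp add: algebra_simps)
  have G': "2 * int (GG k (k - 1)) = (int k - 1) * int k" using G assms(1) by (simp add: of_nat_diff)
  have "2 * (int k * (int k - 1)) + (int k - 3) * ((int k - 1) * int k) \<le> 2 * (int k * int N)"
    using h2 unfolding G' .
  hence "int k * ((int k - 1) * (int k - 1)) \<le> int k * (2 * int N)"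
    using assms(1) by (simp add: of_nat_diff algebra_simps)
  hence "(int k - 1) * (int k - 1) \<le> 2 * int N"
    using assms(1) by (simp add: mult_le_cancel_left)
  hence "(real k - 1) * (real k - 1) \<le> 2 * real N"
    by (metis (mono_tags, opaque_lifting) of_int_le_iff of_int_mult of_int_of_nat_eq of_int_diff of_int_1 of_int_numeral)
  then show ?thesis unfolding N_def by (simp add: power2_eq_square)
qed

end
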